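(* Let $\ell\ge1$, $N=2^\ell$, $n_c,n_v\ge1$, and let ${\mathbf x}_{h,u}\in\mathbb{F}_2^\ell$ for $h\in\{0,\dots,n_c-1\}$, $u\in\{0,\dots,n_v-1\}$. Let $H$ be the $n_cN\times n_vN$ block matrix whose $(h,u)$ block is $P_{{\mathbf x}_{h,u}}$. For $0\le h<i\le n_c-1$ and ${\boldsymbol\alpha}\in\mathbb{F}_2^\ell$, let $\rho_{h,i}({\boldsymbol\alpha})=|\{u\in\{0,\dots,n_v-1\}: {\mathbf x}_{h,u}+{\mathbf x}_{i,u}={\boldsymbol\alpha}\}|$ (the multiplicity of ${\boldsymbol\alpha}$ in the multiset $A_{h,i}=\{{\mathbf x}_{h,u}+{\mathbf x}_{i,u}: u\}$). Then the number of $4$-cycles in the Tanner graph of $H$ is $$\mathcal{N}_4=2^\ell\sum_{0\le h<i\le n_c-1}\ \sum_{{\boldsymbol\alpha}\in\mathbb{F}_2^\ell}\binom{\rho_{h,i}({\boldsymbol\alpha})}{2}.$$ Consequently, the Tanner graph of $H$ has girth greater than $4$ if and only if, for every $h<i$, the elements ${\mathbf x}_{h,u}+{\mathbf x}_{i,u}$, $u=0,\dots,n_v-1$, are pairwise distinct.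
   Context: Rows and columns of $N\times N$ binary matrices are indexed by $\mathbb{F}_2^\ell$ via ${\mathbf x}=(x_1,\dots,x_\ell)\leftrightarrow 1+\sum_i x_i2^{i-1}$. For ${\mathbf a}\in\mathbb{F}_2^\ell$, $P_{\mathbf a}$ is the $N\times N$ binary matrix with $(P_{\mathbf a})_{{\mathbf x},{\mathbf y}}=1$ iff ${\mathbf y}={\mathbf x}+{\mathbf a}$ (dyadic permutation matrix). The Tanner graph of a binary matrix is the bipartite graph with check nodes = rows, variable nodes = columns, and edges at the $1$-entries. A $k$-cycle is a closed walk of $k$ edges with distinct vertices and edges; the girth is the length of a shortest cycle. *)

theory Defs
  imports Main "HOL-Library.Extended_Nat"
begin

text \<open>Vectors of F_2^l are represented as boolean lists of length l; addition is
componentwise exclusive or.\<close>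

definition F2vecs :: "nat \<Rightarrow> bool list set" where
  "F2vecs l = {xs. length xs = l}"

definition vadd :: "bool list \<Rightarrow> bool list \<Rightarrow> bool list" where
  "vadd xs ys = map2 (\<noteq>) xs ys"

definition dyadic_perm :: "bool list \<Rightarrow> bool list \<Rightarrow> bool list \<Rightarrow> bool" where
  "dyadic_perm a x y \<longleftrightarrow> y = vadd x a"

text \<open>Block matrix H: rows indexed by (h,x), columns by (u,y); block (h,u) is P_(X h u).\<close>
definition block_rows :: "nat \<Rightarrow> nat \<Rightarrow> (nat \<times> bool list) set" where
  "block_rows l n = {..<n} \<times> F2vecs l"

definition block_H :: "(nat \<Rightarrow> nat \<Rightarrow> bool list) \<Rightarrow> nat \<times> bool list \<Rightarrow> nat \<times> bool list \<Rightarrow> bool" where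
  "block_H X r c = dyadic_perm (X (fst r) (fst c)) (snd r) (snd c)"

text \<open>Tanner graph of a binary matrix M with row set R and column set C:
vertices Inl r (check nodes) and Inr c (variable nodes), edges at the 1-entries.\<close>
definition tanner_adj :: "'r set \<Rightarrow> 'c set \<Rightarrow> ('r \<Rightarrow> 'c \<Rightarrow> bool) \<Rightarrow> ('r + 'c) \<Rightarrow> ('r + 'c) \<Rightarrow> bool" where
  "tanner_adj R C M v w \<longleftrightarrow>
     (\<exists>r c. r \<in> R \<and> c \<in> C \<and> M r c \<and> {v, w} = {Inl r, Inr c})"

text \<open>The k-cycles of the Tanner graph, each identified with its edge set: closed walks
v_0 v_1 ... v_(k-1) v_0 of k edges with distinct vertices and distinct edges.\<close>
definition tanner_cycles :: "'r set \<Rightarrow> 'c set \<Rightarrow> ('r \<Rightarrow> 'c \<Rightarrow> bool) \<Rightarrow> nat \<Rightarrow> ('r + 'c) set set set" where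
  "tanner_cycles R C M k =
     {set (map (\<lambda>i. {vs ! i, vs ! ((i + 1) mod k)}) [0..<k]) | vs.
        0 < k \<and> length vs = k \<and> distinct vs \<and>
        distinct (map (\<lambda>i. {vs ! i, vs ! ((i + 1) mod k)}) [0..<k]) \<and>
        (\<forall>i<k. tanner_adj R C M (vs ! i) (vs ! ((i + 1) mod k)))}"

text \<open>Girth: length of a shortest cycle (infinity if there is none).\<close>
definition tanner_girth :: "'r set \<Rightarrow> 'c set \<Rightarrow> ('r \<Rightarrow> 'c \<Rightarrow> bool) \<Rightarrow> enat" where
  "tanner_girth R C M = Inf (enat ` {k. tanner_cycles R C M k \<noteq> {}})"

end

theory Submission
  imports Defs
begin



lemma vadd_length[simp]: "length (vadd x y) = min (length x) (length y)"
  by (simp add: vadd_def)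
lemma vadd_nth[simp]: "k < length x \<Longrightarrow> k < length y \<Longrightarrow> vadd x y ! k = (x ! k \<noteq> y ! k)"
  by (simp add: vadd_def)

lemma list_eq_nth: "length a = length b \<Longrightarrow> a = b \<longleftrightarrow> (\<forall>k<length a. a!k = b!k)"
  using nth_equalityI by blast

lemma xor_swap:
  assumes "length a = n" "length b = n" "length c = n" "length d = n" "vadd a b = vadd c d"
  shows "vadd b d = vadd a c"
proof -
  have "\<forall>k<n. vadd a b ! k = vadd c d ! k" using assms(5) by simp
  then show ?thesis using assms(1-4) by (auto simp: list_eq_nth)
qed

lemma xor_cancel:
  assumes "length a = n" "length b = n" "length c = n" "vadd a c = vadd b c"
  shows "a = b"
proof -
  have "\<forall>k<n. vadd a c ! k = vadd b c ! k" using assms(4) by simp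
  then show ?thesis using assms(1-3) by (auto simp: list_eq_nth)
qed

lemma xor_inv:
  assumes "length a = n" "length b = n"
  shows "vadd a (vadd a b) = b"
  using assms by (auto simp: list_eq_nth)

lemma xor_tri:
  assumes "length x = n" "length p = n" "length q = n"
  shows "vadd x p = vadd (vadd x (vadd p q)) q"
  using assms by (auto simp: list_eq_nth)

lemma F2vecs_alt: "F2vecs l = {xs. set xs \<subseteq> (UNIV::bool set) \<and> length xs = l}"
  unfolding F2vecs_def by auto

lemma F2vecs_finite: "finite (F2vecs l)"
  unfolding F2vecs_alt by (rule finite_lists_length_eq) simp

lemma F2vecs_card: "card (F2vecs l) = 2 ^ l"
  unfolding F2vecs_alt by (subst card_lists_length_eq) simp_all


lemma tanner_adj_iff:
  "tanner_adj R C M v w \<longleftrightarrow> (\<exists>r c. r \<in> R \<and> c \<in> C \<and> M r c \<and>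
      ((v = Inl r \<and> w = Inr c) \<or> (v = Inr c \<and> w = Inl r)))"
  unfolding tanner_adj_def by (auto simp: doubleton_eq_iff)
lemma adj_isl: "tanner_adj R C M v w \<Longrightarrow> isl v \<noteq> isl w"
  by (auto simp: tanner_adj_iff)

lemma no_small: "k \<in> {1,2,3} \<Longrightarrow> tanner_cycles R C M k = {}"
proof (rule ccontr)
  assume k: "k \<in> {1,2,3}" and ne: "tanner_cycles R C M k \<noteq> {}"
  then obtain vs where len: "length vs = k"
      and dm: "distinct (map (\<lambda>i. {vs ! i, vs ! ((i + 1) mod k)}) [0..<k])"
      and adj: "\<forall>i<k. tanner_adj R C M (vs ! i) (vs ! ((i + 1) mod k))"
    unfolding tanner_cycles_def by blast
  consider "k = 1" | "k = 2" | "k = 3" using k by auto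
  then show False
  proof cases
    case 1
    have "tanner_adj R C M (vs ! 0) (vs ! 0)" using adj 1 by auto
    then show False using adj_isl by blast
  next
    case 2
    have "map (\<lambda>i. {vs ! i, vs ! ((i + 1) mod k)}) [0..<k] = [{vs!0, vs!1}, {vs!1, vs!0}]"
      using 2 by (simp add: upt_rec)
    then show False using dm by (simp add: insert_commute)
  next
    case 3
    have "tanner_adj R C M (vs ! 0) (vs ! 1)" "tanner_adj R C M (vs ! 1) (vs ! 2)"
      "tanner_adj R C M (vs ! 2) (vs ! 0)"
      using adj[rule_format, of 0] adj[rule_format, of 1] adj[rule_format, of 2] 3
      by (simp_all add: numeral_2_eq_2)
    then have "isl (vs!0) \<noteq> isl (vs!1)" "isl (vs!1) \<noteq> isl (vs!2)" "isl (vs!2) \<noteq> isl (vs!0)"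
      using adj_isl by blast+
    then show False by blast
  qed
qed
definition cycle4 :: "'r \<Rightarrow> 'c \<Rightarrow> 'r \<Rightarrow> 'c \<Rightarrow> ('r + 'c) set set" where
  "cycle4 r1 c1 r2 c2 = {{Inl r1, Inr c1}, {Inr c1, Inl r2}, {Inl r2, Inr c2}, {Inr c2, Inl r1}}"



lemma list4: "length vs = 4 \<Longrightarrow> \<exists>a b c d. vs = [a,b,c,d]"
  by (auto simp: length_Suc_conv numeral_eq_Suc)

lemma upt4: "[0..<4] = [0,1,2,3::nat]"
  by (simp add: upt_rec)

lemma cyc4_char:
  "tanner_cycles R C M 4 = {cycle4 r1 c1 r2 c2 | r1 c1 r2 c2. r1 \<in> R \<and> r2 \<in> R \<and> c1 \<in> C \<and> c2 \<in> C
      \<and> r1 \<noteq> r2 \<and> c1 \<noteq> c2 \<and> M r1 c1 \<and> M r2 c1 \<and> M r2 c2 \<and> M r1 c2}" (is "?A = ?B")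
proof
  show "tanner_cycles R C M 4 \<subseteq> ?B"
  proof
    fix E assume "E \<in> tanner_cycles R C M 4"
    then obtain vs where E: "E = set (map (\<lambda>i. {vs ! i, vs ! ((i + 1) mod 4)}) [0..<4])"
      and len: "length vs = 4" and dist: "distinct vs"
      and adj: "\<forall>i<4. tanner_adj R C M (vs ! i) (vs ! ((i + 1) mod 4))"
      unfolding tanner_cycles_def by blast
    from list4[OF len] obtain a b c d where vs: "vs = [a,b,c,d]" by blast
    have E': "E = {{a,b},{b,c},{c,d},{d,a}}" using E vs by (simp add: upt4)
    have ab: "tanner_adj R C M a b" using adj[rule_format, of 0] vs by simp
    have bc: "tanner_adj R C M b c" using adj[rule_format, of 1] vs by simp
    have cd: "tanner_adj R C M c d" using adj[rule_format, of 2] vs by simp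
    have da: "tanner_adj R C M d a" using adj[rule_format, of 3] vs by simp
    have dd: "distinct [a,b,c,d]" using dist vs by simp
    show "E \<in> ?B"
    proof (cases a)
      case (Inl r1)
      with ab obtain c1 where b: "b = Inr c1" "r1 \<in> R" "c1 \<in> C" "M r1 c1" by (auto simp: tanner_adj_iff)
      with bc obtain r2 where c: "c = Inl r2" "r2 \<in> R" "M r2 c1" by (auto simp: tanner_adj_iff)
      with cd obtain c2 where d: "d = Inr c2" "c2 \<in> C" "M r2 c2" by (auto simp: tanner_adj_iff)
      with da Inl have "M r1 c2" by (auto simp: tanner_adj_iff)
      then have "E = cycle4 r1 c1 r2 c2" using Inl b c d E' unfolding cycle4_def by auto
      then show ?thesis unfolding mem_Collect_eq
        by (intro exI[of _ r1] exI[of _ c1] exI[of _ r2] exI[of _ c2]) (use Inl b c d dd \<open>M r1 c2\<close> in auto)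
    next
      case (Inr c1)
      with ab obtain r1 where b: "b = Inl r1" "r1 \<in> R" "c1 \<in> C" "M r1 c1" by (auto simp: tanner_adj_iff)
      with bc obtain c2 where c: "c = Inr c2" "c2 \<in> C" "M r1 c2" by (auto simp: tanner_adj_iff)
      with cd obtain r2 where d: "d = Inl r2" "r2 \<in> R" "M r2 c2" by (auto simp: tanner_adj_iff)
      with da Inr have "M r2 c1" by (auto simp: tanner_adj_iff)
      then have "E = cycle4 r1 c2 r2 c1" using Inr b c d E' unfolding cycle4_def by auto
      then show ?thesis unfolding mem_Collect_eq
        by (intro exI[of _ r1] exI[of _ c2] exI[of _ r2] exI[of _ c1]) (use Inr b c d dd \<open>M r2 c1\<close> in auto)
    qed
  qed
next
  show "?B \<subseteq> tanner_cycles R C M 4"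
  proof
    fix E assume "E \<in> ?B"
    then obtain r1 c1 r2 c2 where E: "E = cycle4 r1 c1 r2 c2" and h: "r1 \<in> R" "r2 \<in> R" "c1 \<in> C" "c2 \<in> C"
      "r1 \<noteq> r2" "c1 \<noteq> c2" "M r1 c1" "M r2 c1" "M r2 c2" "M r1 c2" by blast
    let ?vs = "[Inl r1, Inr c1, Inl r2, Inr c2]"
    have "E = set (map (\<lambda>i. {?vs ! i, ?vs ! ((i + 1) mod 4)}) [0..<4])"
      using E by (simp add: upt4 cycle4_def)
    moreover have "distinct (map (\<lambda>i. {?vs ! i, ?vs ! ((i + 1) mod 4)}) [0..<4])"
      using h by (auto simp: upt4 doubleton_eq_iff)
    moreover have "\<forall>i<4. tanner_adj R C M (?vs ! i) (?vs ! ((i + 1) mod 4))"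
    proof (intro allI impI)
      fix i :: nat assume "i < 4"
      then have "i = 0 \<or> i = 1 \<or> i = 2 \<or> i = 3" by auto
      then show "tanner_adj R C M (?vs ! i) (?vs ! ((i + 1) mod 4))"
        using h by (auto simp: tanner_adj_iff)
    qed
    moreover have "distinct ?vs" using h by simp
    ultimately show "E \<in> tanner_cycles R C M 4" unfolding tanner_cycles_def
      unfolding mem_Collect_eq by (intro exI[of _ ?vs]) (simp only: h, simp)
  qed
qed



definition Aset :: "(nat \<Rightarrow> nat \<Rightarrow> bool list) \<Rightarrow> nat \<Rightarrow> nat \<Rightarrow> nat \<Rightarrow> bool list \<Rightarrow> nat set" where
  "Aset X nv h i \<alpha> = {u\<in>{..<nv}. vadd (X h u) (X i u) = \<alpha>}"

definition Tset :: "(nat \<Rightarrow> nat \<Rightarrow> bool list) \<Rightarrow> nat \<Rightarrow> nat \<Rightarrow> nat \<Rightarrow> (nat \<times> nat \<times> bool list \<times> bool list \<times> nat set) set" where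
  "Tset X l nc nv = (SIGMA h:{..<nc}. SIGMA i:{h<..<nc}. SIGMA x:F2vecs l. SIGMA \<alpha>:F2vecs l.
      {P. P \<subseteq> Aset X nv h i \<alpha> \<and> card P = 2})"

definition gmap :: "(nat \<Rightarrow> nat \<Rightarrow> bool list) \<Rightarrow> (nat \<times> nat \<times> bool list \<times> bool list \<times> nat set) \<Rightarrow> ((nat \<times> bool list) + (nat \<times> bool list)) set set" where
  "gmap X = (\<lambda>(h,i,x,\<alpha>,P). (\<lambda>u. {Inl (h,x), Inr (u, vadd x (X h u))}) ` P \<union>
                          (\<lambda>u. {Inl (i, vadd x \<alpha>), Inr (u, vadd x (X h u))}) ` P)"

lemma card_T: "card (Tset X l nc nv) = 2 ^ l * (\<Sum>h<nc. \<Sum>i\<in>{h<..<nc}. \<Sum>\<alpha>\<in>F2vecs l.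
                 card {u\<in>{..<nv}. vadd (X h u) (X i u) = \<alpha>} choose 2)"
proof -
  have fA: "finite (Aset X nv h i \<alpha>)" for h i \<alpha> unfolding Aset_def by simp
  have fP: "finite {P. P \<subseteq> Aset X nv h i \<alpha> \<and> card P = 2}" for h i \<alpha>
    using fA by (rule rev_finite_subset[OF finite_Pow_iff[THEN iffD2]]) auto
  have "card (Tset X l nc nv) = (\<Sum>h<nc. \<Sum>i\<in>{h<..<nc}. \<Sum>x\<in>F2vecs l. \<Sum>\<alpha>\<in>F2vecs l.
          card {P. P \<subseteq> Aset X nv h i \<alpha> \<and> card P = 2})"
    unfolding Tset_def using fP F2vecs_finite
    by (simp add: card_SigmaI finite_SigmaI)
  also have "\<dots> = (\<Sum>h<nc. \<Sum>i\<in>{h<..<nc}. \<Sum>x\<in>F2vecs l. \<Sum>\<alpha>\<in>F2vecs l.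
          card (Aset X nv h i \<alpha>) choose 2)"
    using fA by (simp add: n_subsets)
  also have "\<dots> = 2 ^ l * (\<Sum>h<nc. \<Sum>i\<in>{h<..<nc}. \<Sum>\<alpha>\<in>F2vecs l.
                 card {u\<in>{..<nv}. vadd (X h u) (X i u) = \<alpha>} choose 2)"
    by (simp add: F2vecs_card sum_distrib_left Aset_def)
  finally show ?thesis .
qed




lemma gmap_pair:
  assumes "P = {u,v}"
  shows "gmap X (h,i,x,\<alpha>,P) = cycle4 (h,x) (u, vadd x (X h u)) (i, vadd x \<alpha>) (v, vadd x (X h v))"
  using assms unfolding gmap_def cycle4_def by (simp add: insert_commute)
lemma cyc4_mem: "r1 \<in> R \<Longrightarrow> r2 \<in> R \<Longrightarrow> c1 \<in> C \<Longrightarrow> c2 \<in> C \<Longrightarrow> r1 \<noteq> r2 \<Longrightarrow> c1 \<noteq> c2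
  \<Longrightarrow> M r1 c1 \<Longrightarrow> M r2 c1 \<Longrightarrow> M r2 c2 \<Longrightarrow> M r1 c2 \<Longrightarrow> cycle4 r1 c1 r2 c2 \<in> tanner_cycles R C M 4"
  unfolding cyc4_char by blast

lemma cycle4_swap: "cycle4 r2 c1 r1 c2 = cycle4 r1 c1 r2 c2"
  by (simp add: cycle4_def insert_commute)

lemma M_iff: "block_H X r c \<longleftrightarrow> snd c = vadd (snd r) (X (fst r) (fst c))"
  by (simp add: block_H_def dyadic_perm_def)

lemma cycles_eq:
  assumes XL: "\<And>h u. h < nc \<Longrightarrow> u < nv \<Longrightarrow> X h u \<in> F2vecs l"
  shows "tanner_cycles (block_rows l nc) (block_rows l nv) (block_H X) 4 = gmap X ` Tset X l nc nv"
proof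
  show "gmap X ` Tset X l nc nv \<subseteq> tanner_cycles (block_rows l nc) (block_rows l nv) (block_H X) 4"
  proof
    fix E assume "E \<in> gmap X ` Tset X l nc nv"
    then obtain h i x \<alpha> P where E: "E = gmap X (h,i,x,\<alpha>,P)" and h: "h < nc" "h < i" "i < nc"
      and x: "x \<in> F2vecs l" and a: "\<alpha> \<in> F2vecs l" and P: "P \<subseteq> Aset X nv h i \<alpha>" "card P = 2"
      unfolding Tset_def by auto
    from P(2) obtain u v where uv: "P = {u,v}" "u \<noteq> v" by (auto simp: card_2_iff)
    have u: "u < nv" "vadd (X h u) (X i u) = \<alpha>" and v: "v < nv" "vadd (X h v) (X i v) = \<alpha>"
      using P(1) uv unfolding Aset_def by auto
    have L: "length x = l" "length \<alpha> = l" "length (X h u) = l" "length (X i u) = l"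
      "length (X h v) = l" "length (X i v) = l"
      using x a XL h u v by (auto simp: F2vecs_def)
    have e1: "vadd x (X h u) = vadd (vadd x \<alpha>) (X i u)"
      using xor_tri[of x l "X h u" "X i u"] L u by simp
    have e2: "vadd x (X h v) = vadd (vadd x \<alpha>) (X i v)"
      using xor_tri[of x l "X h v" "X i v"] L v by simp
    show "E \<in> tanner_cycles (block_rows l nc) (block_rows l nv) (block_H X) 4"
      unfolding E gmap_pair[OF uv(1)]
      apply (rule cyc4_mem)
      using h u(1) v(1) L e1 e2 uv(2) by (simp_all add: M_iff block_rows_def F2vecs_def)
  qed
next
  show "tanner_cycles (block_rows l nc) (block_rows l nv) (block_H X) 4 \<subseteq> gmap X ` Tset X l nc nv"
  proof
    fix E assume "E \<in> tanner_cycles (block_rows l nc) (block_rows l nv) (block_H X) 4"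
    then obtain r1 c1 r2 c2 where E: "E = cycle4 r1 c1 r2 c2"
      and R: "r1 \<in> block_rows l nc" "r2 \<in> block_rows l nc" "c1 \<in> block_rows l nv" "c2 \<in> block_rows l nv"
      and ne: "r1 \<noteq> r2" "c1 \<noteq> c2"
      and M: "block_H X r1 c1" "block_H X r2 c1" "block_H X r2 c2" "block_H X r1 c2"
      unfolding cyc4_char by blast
    obtain h1 x1 where r1: "r1 = (h1,x1)" by force
    obtain h2 x2 where r2: "r2 = (h2,x2)" by force
    obtain u a where c1: "c1 = (u,a)" by force
    obtain v b where c2: "c2 = (v,b)" by force
    have bnd: "h1 < nc" "h2 < nc" "u < nv" "v < nv" "length x1 = l" "length x2 = l" "length a = l" "length b = l"
      using R r1 r2 c1 c2 by (auto simp: block_rows_def F2vecs_def)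
    have XL': "length (X h1 u) = l" "length (X h2 u) = l" "length (X h1 v) = l" "length (X h2 v) = l"
      using XL bnd by (auto simp: F2vecs_def)
    have eqs: "a = vadd x1 (X h1 u)" "a = vadd x2 (X h2 u)" "b = vadd x2 (X h2 v)" "b = vadd x1 (X h1 v)"
      using M r1 r2 c1 c2 by (auto simp: M_iff)
    have "h1 \<noteq> h2"
    proof
      assume "h1 = h2"
      then have "vadd x1 (X h1 u) = vadd x2 (X h1 u)" using eqs by simp
      then have "x1 = x2" using xor_cancel[of x1 l x2 "X h1 u"] bnd XL' by simp
      then show False using ne r1 r2 \<open>h1 = h2\<close> by simp
    qed
    have "u \<noteq> v"
    proof
      assume "u = v"
      then have "a = b" using eqs by simp
      then show False using ne c1 c2 \<open>u = v\<close> by simp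
    qed
    have s1: "vadd (X h1 u) (X h2 u) = vadd x1 x2" "vadd (X h1 v) (X h2 v) = vadd x1 x2"
      using xor_swap[of x1 l "X h1 u" x2 "X h2 u"] xor_swap[of x1 l "X h1 v" x2 "X h2 v"] eqs bnd XL' by auto
    have s2: "vadd (X h2 u) (X h1 u) = vadd x2 x1" "vadd (X h2 v) (X h1 v) = vadd x2 x1"
      using xor_swap[of x2 l "X h2 u" x1 "X h1 u"] xor_swap[of x2 l "X h2 v" x1 "X h1 v"] eqs bnd XL' by auto
    show "E \<in> gmap X ` Tset X l nc nv"
    proof (cases "h1 < h2")
      case True
      let ?t = "(h1, h2, x1, vadd x1 x2, {u,v})"
      have "?t \<in> Tset X l nc nv"
        unfolding Tset_def Aset_def using True bnd s1 \<open>u \<noteq> v\<close> by (auto simp: F2vecs_def)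
      moreover have "gmap X ?t = E"
        unfolding gmap_pair[OF refl] E r1 r2 c1 c2 using eqs xor_inv[of x1 l x2] bnd by simp
      ultimately show ?thesis by (metis image_eqI)
    next
      case False
      then have lt: "h2 < h1" using \<open>h1 \<noteq> h2\<close> by simp
      let ?t = "(h2, h1, x2, vadd x2 x1, {u,v})"
      have "?t \<in> Tset X l nc nv"
        unfolding Tset_def Aset_def using lt bnd s2 \<open>u \<noteq> v\<close> by (auto simp: F2vecs_def)
      moreover have "gmap X ?t = E"
        unfolding gmap_pair[OF refl] E r1 r2 c1 c2 using eqs xor_inv[of x2 l x1] bnd
        by (simp add: cycle4_swap)
      ultimately show ?thesis by (metis image_eqI)
    qed
  qed
qed



definition Lv :: "('r + 'c) set set \<Rightarrow> 'r set" where "Lv E = {r. \<exists>e\<in>E. Inl r \<in> e}"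
definition Rv :: "('r + (nat \<times> 'b)) set set \<Rightarrow> nat set" where "Rv E = {u. \<exists>e\<in>E. \<exists>y. Inr (u,y) \<in> e}"

lemma Lv_cycle4: "Lv (cycle4 r1 c1 r2 c2) = {r1, r2}"
  unfolding Lv_def cycle4_def by auto

lemma Rv_cycle4: "Rv (cycle4 r1 (u,a) r2 (v,b)) = {u, v}"
  unfolding Rv_def cycle4_def by auto

lemma gmap_inj:
  assumes XL: "\<And>h u. h < nc \<Longrightarrow> u < nv \<Longrightarrow> X h u \<in> F2vecs l"
  shows "inj_on (gmap X) (Tset X l nc nv)"
proof
  fix t t' assume t: "t \<in> Tset X l nc nv" and t': "t' \<in> Tset X l nc nv" and eq: "gmap X t = gmap X t'"
  obtain h i x \<alpha> P where tt: "t = (h,i,x,\<alpha>,P)" by (cases t) auto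
  obtain h' i' x' \<alpha>' P' where tt': "t' = (h',i',x',\<alpha>',P')" by (cases t') auto
  have c: "h < i" "x \<in> F2vecs l" "\<alpha> \<in> F2vecs l" "card P = 2" using t tt unfolding Tset_def by auto
  have c': "h' < i'" "x' \<in> F2vecs l" "\<alpha>' \<in> F2vecs l" "card P' = 2" using t' tt' unfolding Tset_def by auto
  from c(4) obtain u v where uv: "P = {u,v}" by (auto simp: card_2_iff)
  from c'(4) obtain u' v' where uv': "P' = {u',v'}" by (auto simp: card_2_iff)
  have "Lv (gmap X t) = {(h,x),(i,vadd x \<alpha>)}" unfolding tt gmap_pair[OF uv] Lv_cycle4 ..
  moreover have "Lv (gmap X t') = {(h',x'),(i',vadd x' \<alpha>')}" unfolding tt' gmap_pair[OF uv'] Lv_cycle4 ..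
  ultimately have "{(h,x),(i,vadd x \<alpha>)} = {(h',x'),(i',vadd x' \<alpha>')}" using eq by simp
  then have "((h,x) = (h',x') \<and> (i,vadd x \<alpha>) = (i',vadd x' \<alpha>')) \<or> ((h,x) = (i',vadd x' \<alpha>') \<and> (i,vadd x \<alpha>) = (h',x'))"
    by (simp only: doubleton_eq_iff)
  then have 1: "h = h'" "x = x'" "i = i'" "vadd x \<alpha> = vadd x' \<alpha>'"
    using c(1) c'(1) by auto
  have "\<alpha> = \<alpha>'" 
  proof -
    have "\<alpha> = vadd x (vadd x \<alpha>)" using xor_inv[of x l \<alpha>] c by (simp add: F2vecs_def)
    also have "\<dots> = vadd x' (vadd x' \<alpha>')" using 1 by simp
    also have "\<dots> = \<alpha>'" using xor_inv[of x' l \<alpha>'] c' by (simp add: F2vecs_def)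
    finally show ?thesis .
  qed
  have "Rv (gmap X t) = P" unfolding tt gmap_pair[OF uv] Rv_cycle4 by (simp add: uv)
  moreover have "Rv (gmap X t') = P'" unfolding tt' gmap_pair[OF uv'] Rv_cycle4 by (simp add: uv')
  ultimately have "P = P'" using eq by simp
  show "t = t'" using tt tt' 1 \<open>\<alpha> = \<alpha>'\<close> \<open>P = P'\<close> by simp
qed



lemma T_empty:
  assumes XL: "\<And>h u. h < nc \<Longrightarrow> u < nv \<Longrightarrow> X h u \<in> F2vecs l"
  shows "Tset X l nc nv = {} \<longleftrightarrow> (\<forall>h i. h < i \<and> i < nc \<longrightarrow> inj_on (\<lambda>u. vadd (X h u) (X i u)) {..<nv})"
proof
  assume T: "Tset X l nc nv = {}"
  show "\<forall>h i. h < i \<and> i < nc \<longrightarrow> inj_on (\<lambda>u. vadd (X h u) (X i u)) {..<nv}"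
  proof (intro allI impI inj_onI, rule ccontr)
    fix h i u v assume hi: "h < i \<and> i < nc" and u: "u \<in> {..<nv}" and v: "v \<in> {..<nv}"
      and e: "vadd (X h u) (X i u) = vadd (X h v) (X i v)" and ne: "u \<noteq> v"
    let ?t = "(h, i, replicate l False, vadd (X h u) (X i u), {u,v})"
    have "length (X h u) = l" "length (X i u) = l" "length (X h v) = l" "length (X i v) = l"
      using XL hi u v by (auto simp: F2vecs_def)
    then have "?t \<in> Tset X l nc nv" unfolding Tset_def Aset_def using hi u v e ne
      by (auto simp: F2vecs_def card_2_iff)
    then show False using T by simp
  qed
next
  assume I: "\<forall>h i. h < i \<and> i < nc \<longrightarrow> inj_on (\<lambda>u. vadd (X h u) (X i u)) {..<nv}"
  show "Tset X l nc nv = {}"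
  proof (rule ccontr)
    assume "Tset X l nc nv \<noteq> {}"
    then obtain t where t: "t \<in> Tset X l nc nv" by blast
    obtain h i x \<alpha> P where tt: "t = (h,i,x,\<alpha>,P)" by (cases t) auto
    have c: "h < i" "i < nc" "P \<subseteq> Aset X nv h i \<alpha>" "card P = 2" using t unfolding tt Tset_def by auto
    from c(4) obtain u v where uv: "P = {u,v}" "u \<noteq> v" by (auto simp: card_2_iff)
    have "u < nv" "v < nv" "vadd (X h u) (X i u) = vadd (X h v) (X i v)"
      using c(3) uv(1) unfolding Aset_def by auto
    then show False using I c(1,2) uv(2) by (auto dest: inj_onD)
  qed
qed

lemma cyc0: "tanner_cycles R C M 0 = {}"
  unfolding tanner_cycles_def by auto

lemma girth_iff: "tanner_girth R C M > 4 \<longleftrightarrow> tanner_cycles R C M 4 = {}"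
proof
  assume g: "tanner_girth R C M > 4"
  show "tanner_cycles R C M 4 = {}"
  proof (rule ccontr)
    assume "tanner_cycles R C M 4 \<noteq> {}"
    then have "enat 4 \<in> enat ` {k. tanner_cycles R C M k \<noteq> {}}" by auto
    then have "tanner_girth R C M \<le> enat 4" unfolding tanner_girth_def by (rule Inf_lower)
    then show False using g by (simp add: numeral_eq_enat)
  qed
next
  assume e: "tanner_cycles R C M 4 = {}"
  have "enat 5 \<le> tanner_girth R C M" unfolding tanner_girth_def
  proof (rule Inf_greatest)
    fix z assume "z \<in> enat ` {k. tanner_cycles R C M k \<noteq> {}}"
    then obtain k where z: "z = enat k" and k: "tanner_cycles R C M k \<noteq> {}" by auto
    have "k \<noteq> 0" using k cyc0 by auto
    moreover have "k \<notin> {1,2,3}" using k no_small by blast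
    moreover have "k \<noteq> 4" using k e by auto
    ultimately have "k \<ge> 5" by auto
    then show "enat 5 \<le> z" using z by simp
  qed
  moreover have "enat 4 < enat 5" by simp
  ultimately show "tanner_girth R C M > 4" unfolding numeral_eq_enat by (rule order.strict_trans2[rotated])
qed

theorem mainTheorem6:
  fixes l nc nv :: nat and X :: "nat \<Rightarrow> nat \<Rightarrow> bool list"
  assumes "l \<ge> 1" and "nc \<ge> 1" and "nv \<ge> 1"
    and "\<And>h u. h < nc \<Longrightarrow> u < nv \<Longrightarrow> X h u \<in> F2vecs l"
  shows "card (tanner_cycles (block_rows l nc) (block_rows l nv) (block_H X) 4)
           = 2 ^ l * (\<Sum>h<nc. \<Sum>i\<in>{h<..<nc}. \<Sum>\<alpha>\<in>F2vecs l.
                 card {u\<in>{..<nv}. vadd (X h u) (X i u) = \<alpha>} choose 2)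
       \<and> (tanner_girth (block_rows l nc) (block_rows l nv) (block_H X) > 4
           \<longleftrightarrow> (\<forall>h i. h < i \<and> i < nc \<longrightarrow> inj_on (\<lambda>u. vadd (X h u) (X i u)) {..<nv}))"
proof
  have ceq: "tanner_cycles (block_rows l nc) (block_rows l nv) (block_H X) 4 = gmap X ` Tset X l nc nv"
    by (rule cycles_eq[OF assms(4)])
  have inj: "inj_on (gmap X) (Tset X l nc nv)" by (rule gmap_inj[OF assms(4)])
  show "card (tanner_cycles (block_rows l nc) (block_rows l nv) (block_H X) 4)
           = 2 ^ l * (\<Sum>h<nc. \<Sum>i\<in>{h<..<nc}. \<Sum>\<alpha>\<in>F2vecs l.
                 card {u\<in>{..<nv}. vadd (X h u) (X i u) = \<alpha>} choose 2)"
    unfolding ceq card_image[OF inj] card_T ..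
  have "tanner_girth (block_rows l nc) (block_rows l nv) (block_H X) > 4 \<longleftrightarrow> Tset X l nc nv = {}"
    unfolding girth_iff ceq by simp
  also have "\<dots> \<longleftrightarrow> (\<forall>h i. h < i \<and> i < nc \<longrightarrow> inj_on (\<lambda>u. vadd (X h u) (X i u)) {..<nv})"
    by (rule T_empty[OF assms(4)])
  finally show "tanner_girth (block_rows l nc) (block_rows l nv) (block_H X) > 4
           \<longleftrightarrow> (\<forall>h i. h < i \<and> i < nc \<longrightarrow> inj_on (\<lambda>u. vadd (X h u) (X i u)) {..<nv})" .
qed

end
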